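(* Let $\phi$ be a Pogorelov solution and $\phi^*(x)=\sup_{y\in B(0,1)}\{x\cdot y-\phi(y)\}$ its Legendre–Fenchel dual. Let $x\in\mathbb{R}^2$ be any point outside the convex hull of $\{d_1,\dots,d_K\}$. Then $\partial\phi^*(x)\subset\partial B(0,1)$.
   Context: Let $K\ge 1$, $d_1,\dots,d_K\in\mathbb{R}^2$, $\alpha_1,\dots,\alpha_K>0$ with $\sum_k\alpha_k=\pi=|B(0,1)|$, where $B(0,1)$ is the unit ball of $\mathbb{R}^2$, $\partial B(0,1)$ its boundary circle, and $|\cdot|$ is Lebesgue measure. Subgradient of a convex $u$: $\partial u(x)=\{p: u(z)\ge u(x)+p\cdot(z-x)\ \forall z\in\mathbb{R}^2\}$. A Pogorelov solution is a function $\phi(y)=\max_{k}\{y\cdot d_k-v_k\}$ on $B(0,1)$ (extended by $+\infty$ outside $B(0,1)$), for some reals $v_1,\dots,v_K$, such that $|C_k|=\alpha_k$ for every $k$, where $C_k=\{y\in B(0,1):\phi$ is differentiable at $y$ and $\nabla\phi(y)=d_k\}$. *)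

theory Defs
  imports "HOL-Analysis.Analysis"
begin

definition subgrad :: "(real^2 \<Rightarrow> real) \<Rightarrow> real^2 \<Rightarrow> (real^2) set" where
  "subgrad u x = {p. \<forall>z. u z \<ge> u x + p \<bullet> (z - x)}"

definition pog_phi :: "nat \<Rightarrow> (nat \<Rightarrow> real^2) \<Rightarrow> (nat \<Rightarrow> real) \<Rightarrow> real^2 \<Rightarrow> real" where
  "pog_phi K d v y = Max ((\<lambda>k. y \<bullet> d k - v k) ` {1..K})"

definition pog_cell :: "nat \<Rightarrow> (nat \<Rightarrow> real^2) \<Rightarrow> (nat \<Rightarrow> real) \<Rightarrow> nat \<Rightarrow> (real^2) set" where
  "pog_cell K d v k = {y \<in> ball 0 1. (pog_phi K d v has_derivative (\<lambda>h. d k \<bullet> h)) (at y)}"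

definition pogorelov :: "nat \<Rightarrow> (nat \<Rightarrow> real^2) \<Rightarrow> (nat \<Rightarrow> real) \<Rightarrow> (nat \<Rightarrow> real) \<Rightarrow> bool" where
  "pogorelov K d alpha v \<longleftrightarrow>
     (\<forall>k\<in>{1..K}. emeasure lebesgue (pog_cell K d v k) = ennreal (alpha k))"

text \<open>Legendre-Fenchel dual of phi (phi = +infinity outside the closed unit ball).\<close>
definition pog_dual :: "nat \<Rightarrow> (nat \<Rightarrow> real^2) \<Rightarrow> (nat \<Rightarrow> real) \<Rightarrow> real^2 \<Rightarrow> real" where
  "pog_dual K d v x = (SUP y\<in>cball 0 1. x \<bullet> y - pog_phi K d v y)"

end

theory Submission
  imports Defs
begin

lemma phi_ge:
  assumes "k \<in> {1..K}"
  shows "y \<bullet> d k - v k \<le> pog_phi K d v y"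
  unfolding pog_phi_def using assms by (intro Max_ge) auto

lemma phi_attain:
  assumes "K \<ge> 1"
  shows "\<exists>k\<in>{1..K}. pog_phi K d v y = y \<bullet> d k - v k"
proof -
  have "pog_phi K d v y \<in> (\<lambda>k. y \<bullet> d k - v k) ` {1..K}"
    unfolding pog_phi_def using assms by (intro Max_in) auto
  then show ?thesis by auto
qed

lemma phi_lt:
  assumes "K \<ge> 1" "\<And>k. k \<in> {1..K} \<Longrightarrow> y \<bullet> d k - v k < c"
  shows "pog_phi K d v y < c"
  using phi_attain[OF assms(1), of d v y] assms(2) by auto

lemma dual_bdd:
  assumes "K \<ge> 1"
  shows "bdd_above ((\<lambda>y. z \<bullet> y - pog_phi K d v y) ` cball 0 1)"
    and "\<And>y. y \<in> cball 0 1 \<Longrightarrow> z \<bullet> y - pog_phi K d v y \<le> norm z + norm (d 1) + v 1"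
proof -
  show b: "z \<bullet> y - pog_phi K d v y \<le> norm z + norm (d 1) + v 1" if "y \<in> cball 0 1" for y
  proof -
    have n: "norm y \<le> 1" using that by auto
    have "z \<bullet> y \<le> norm z * norm y" by (rule norm_cauchy_schwarz)
    also have "\<dots> \<le> norm z" using n by (simp add: mult_left_le)
    finally have 1: "z \<bullet> y \<le> norm z" .
    have "- (y \<bullet> d 1) \<le> norm y * norm (d 1)"
      using norm_cauchy_schwarz[of "-y" "d 1"] by simp
    also have "\<dots> \<le> norm (d 1)" using n by (simp add: mult_left_le_one_le)
    finally have 2: "- (y \<bullet> d 1) \<le> norm (d 1)" .
    have 3: "y \<bullet> d 1 - v 1 \<le> pog_phi K d v y" using assms by (intro phi_ge) auto
    show ?thesis using 1 2 3 by linarith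
  qed
  show "bdd_above ((\<lambda>y. z \<bullet> y - pog_phi K d v y) ` cball 0 1)"
    using b by (intro bdd_aboveI2) 
qed

lemma dual_ge:
  assumes "K \<ge> 1" "y \<in> cball 0 1"
  shows "z \<bullet> y - pog_phi K d v y \<le> pog_dual K d v z"
  unfolding pog_dual_def using assms dual_bdd(1)[OF assms(1)] by (intro cSUP_upper) auto

lemma dual_le:
  assumes "K \<ge> 1"
  shows "pog_dual K d v z \<le> norm z + norm (d 1) + v 1"
  unfolding pog_dual_def using dual_bdd(2)[OF assms(1)] by (intro cSUP_least) auto

lemma dual_dk:
  assumes "K \<ge> 1" "k \<in> {1..K}"
  shows "pog_dual K d v (d k) \<le> v k"
  unfolding pog_dual_def
proof (rule cSUP_least)
  show "cball (0::real^2) 1 \<noteq> {}" by auto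
  fix y :: "real^2" show "d k \<bullet> y - pog_phi K d v y \<le> v k"
    using phi_ge[OF assms(2), of y d v] by (simp add: inner_commute)
qed

theorem lemma2p6:
  fixes K :: nat and d :: "nat \<Rightarrow> real^2" and alpha v :: "nat \<Rightarrow> real" and x :: "real^2"
  assumes "K \<ge> 1"
    and "\<forall>k\<in>{1..K}. alpha k > 0"
    and "(\<Sum>k=1..K. alpha k) = pi"
    and "pogorelov K d alpha v"
    and "x \<notin> convex hull (d ` {1..K})"
  shows "subgrad (pog_dual K d v) x \<subseteq> sphere 0 1"
proof
  fix p assume "p \<in> subgrad (pog_dual K d v) x"
  then have sg: "\<And>z. pog_dual K d v z \<ge> pog_dual K d v x + p \<bullet> (z - x)"
    unfolding subgrad_def by auto
  define F where "F = pog_dual K d v"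
  define f where "f = pog_phi K d v"
  define B where "B = norm (d 1) + v 1"
  have sg': "\<And>z. F z \<ge> F x + p \<bullet> (z - x)" using sg F_def by auto
  have up: "\<And>z. F z \<le> norm z + B" unfolding F_def B_def using dual_le[OF assms(1), of d v] by (simp add: add.assoc)
  have pin: "norm p \<le> 1"
  proof (rule ccontr)
    assume "\<not> norm p \<le> 1"
    then have p1: "norm p > 1" by simp
    define c where "c = norm p * norm p - norm p"
    have c0: "c > 0" unfolding c_def proof -
      have "norm p * 1 < norm p * norm p" using p1 by (intro mult_strict_left_mono) auto
      then show "0 < norm p * norm p - norm p" by simp
    qed
    define t where "t = (\<bar>norm x + B - F x\<bar> + 1) / c"
    have t0: "t > 0" unfolding t_def using c0 by auto
    have "F x + p \<bullet> (t *\<^sub>R p) \<le> F (x + t *\<^sub>R p)" using sg'[of "x + t *\<^sub>R p"] by simp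
    also have "\<dots> \<le> norm (x + t *\<^sub>R p) + B" by (rule up)
    also have "\<dots> \<le> norm x + t * norm p + B" using norm_triangle_ineq[of x "t *\<^sub>R p"] t0 by simp
    finally have fin: "F x + p \<bullet> (t *\<^sub>R p) \<le> norm x + t * norm p + B" .
    have "p \<bullet> (t *\<^sub>R p) = t * (norm p * norm p)"
      using power2_norm_eq_inner[of p] by (simp add: power2_eq_square)
    then have "F x + t * (norm p * norm p) \<le> norm x + t * norm p + B" using fin by linarith
    then have "t * c \<le> norm x + B - F x" unfolding c_def by (simp add: algebra_simps)
    moreover have "t * c = \<bar>norm x + B - F x\<bar> + 1" unfolding t_def using c0 by simp
    ultimately show False by linarith
  qed
  have pc: "p \<in> cball 0 1" using pin by simp
  obtain k where k: "k \<in> {1..K}" "f p = p \<bullet> d k - v k"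
    using phi_attain[OF assms(1)] f_def by blast
  have "v k \<ge> F x + p \<bullet> (d k - x)"
    using sg'[of "d k"] dual_dk[OF assms(1) k(1), of d v] F_def by force
  then have Fx: "F x \<le> x \<bullet> p - f p" using k(2) by (simp add: inner_diff_right inner_commute)
  have max: "\<And>y. y \<in> cball 0 1 \<Longrightarrow> x \<bullet> y - f y \<le> F x"
    using dual_ge[OF assms(1)] F_def f_def by auto
  show "p \<in> sphere 0 1"
  proof (rule ccontr)
    assume "p \<notin> sphere 0 1"
    then have pl: "norm p < 1" using pin by simp
    have cvx: "convex (convex hull (d ` {1..K}))" by simp
    have cl: "closed (convex hull (d ` {1..K}))"
      by (intro compact_imp_closed compact_convex_hull finite_imp_compact) auto
    obtain a b where ab: "a \<bullet> x < b" "\<forall>y\<in>convex hull (d ` {1..K}). b < a \<bullet> y"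
      using separating_hyperplane_closed_point[OF cvx cl assms(5)] by blast
    have dk: "\<And>j. j \<in> {1..K} \<Longrightarrow> a \<bullet> d j > b"
      using ab(2) hull_subset[of "d ` {1..K}" convex] by (meson image_eqI subsetD)
    have a0: "a \<noteq> 0" using dk[of 1] ab(1) assms(1) by auto
    define s where "s = (1 - norm p) / norm a"
    have s0: "s > 0" unfolding s_def using pl a0 by auto
    define q where "q = p - s *\<^sub>R a"
    have "norm q \<le> norm p + norm (s *\<^sub>R a)" unfolding q_def by (rule norm_triangle_ineq4)
    also have "norm (s *\<^sub>R a) = 1 - norm p" unfolding s_def using a0 pl by simp
    finally have qc: "q \<in> cball 0 1" by simp
    have "f q < f p - s * (a \<bullet> x)"
      unfolding f_def
    proof (rule phi_lt[OF assms(1)])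
      fix j assume j: "j \<in> {1..K}"
      have "q \<bullet> d j - v j = (p \<bullet> d j - v j) - s * (a \<bullet> d j)"
        unfolding q_def by (simp add: inner_diff_left inner_diff_right inner_commute)
      also have "\<dots> < (p \<bullet> d j - v j) - s * (a \<bullet> x)"
        using dk[OF j] ab(1) s0 by (simp add: mult_strict_left_mono)
      also have "\<dots> \<le> f p - s * (a \<bullet> x)" using phi_ge[OF j] f_def by auto
      finally show "q \<bullet> d j - v j < pog_phi K d v p - s * (a \<bullet> x)" using f_def by simp
    qed
    then have "x \<bullet> q - f q > x \<bullet> p - f p"
      unfolding q_def by (simp add: inner_diff_right inner_commute)
    with max[OF qc] Fx show False by linarith
  qed
qed

end
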